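(* Let $d\ge3$, $|\lambda|\le 2\sqrt{d-1}$, and let $v_1,\dots,v_d,w\in\mathbb{R}^d$ be unit vectors with $(v_i,v_j)=(\lambda^2-d)/(d(d-1))$ for $i\ne j$ and $(v_i,w)=\lambda/d$ for all $i$. Let $\alpha,\beta\in\mathbb{R}$ be such that the vectors $a_i=\alpha w+\beta v_i$ and $b_i=\alpha v_i+\beta w$ satisfy $(a_i,b_i)=0$ and $\|a_i\|_2=\|b_i\|_2=1$ for all $1\le i\le d$. Then there are numbers $t_1,t_2\ge0$ with $t_1+t_2=1$ such that for every $u\in\mathbb{R}^d$, $$\|u\|_2^2=\sum_{i=1}^d\Big(t_1(u,a_i)^2+t_2(u,b_i)^2\Big).$$
   Context: $(\cdot,\cdot)$ denotes the standard inner product on $\mathbb{R}^d$. *)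

theory Defs
  imports "HOL-Analysis.Analysis"
begin

end

theory Submission
  imports Defs
begin


lemma sum_delta_aux:
  fixes x :: "'a \<Rightarrow> real"
  assumes "finite A"
  shows "(\<Sum>i\<in>A. x i * ((if i = k then h else 0) - q)) = (if k \<in> A then x k * h else 0) - q * (\<Sum>i\<in>A. x i)"
proof -
  have "(\<Sum>i\<in>A. x i * ((if i = k then h else 0) - q)) = (\<Sum>i\<in>A. (if i = k then x i * h else 0)) - (\<Sum>i\<in>A. q * x i)"
    by (simp add: sum_subtractf[symmetric] algebra_simps) (rule sum.cong, auto)
  thus ?thesis using assms by (simp add: sum_distrib_left)
qed

lemma frame:
  fixes v :: "'n::finite \<Rightarrow> real ^ 'n" and w :: "real ^ 'n" and lam n :: real
  assumes n_def: "n = real CARD('n)"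
    and n3: "n \<ge> 3" and lamlt: "lam\<^sup>2 < n\<^sup>2"
    and vunit: "\<And>i. v i \<bullet> v i = 1"
    and wunit: "w \<bullet> w = 1"
    and vv: "\<And>i j. i \<noteq> j \<Longrightarrow> v i \<bullet> v j = (lam\<^sup>2 - n) / (n * (n - 1))"
    and vw: "\<And>i. v i \<bullet> w = lam / n"
  shows "(\<Sum>i\<in>UNIV. (u \<bullet> v i)\<^sup>2) = (1 - (lam\<^sup>2 - n) / (n * (n - 1))) * ((u \<bullet> u) - (u \<bullet> w)\<^sup>2) + lam\<^sup>2 / n * (u \<bullet> w)\<^sup>2
     \<and> (\<Sum>i\<in>UNIV. u \<bullet> v i) = lam * (u \<bullet> w)"
proof -
  define c where "c = lam / n"
  define h where "h = 1 - (lam\<^sup>2 - n) / (n * (n - 1))"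
  define e where "e i = v i - c *\<^sub>R w" for i
  have npos: "n > 0" "n - 1 > 0" using n3 by auto
  have hval: "h = (n\<^sup>2 - lam\<^sup>2) / (n * (n - 1))"
    unfolding h_def using npos by (simp add: field_simps power2_eq_square)
  have hpos: "h > 0" unfolding hval using npos lamlt by simp
  have wv: "w \<bullet> v i = lam / n" for i using vw[of i] by (simp add: inner_commute)
  have we: "w \<bullet> e i = 0" for i unfolding e_def by (simp add: inner_diff_right wv wunit c_def)
  have ew: "e i \<bullet> w = 0" for i
    unfolding e_def by (simp add: inner_diff_left vw wunit c_def)
  have ee: "e i \<bullet> e j = (if i = j then h else 0) - h / n" for i j
  proof (cases "i = j")
    case True
    have "e i \<bullet> e j = 1 - c\<^sup>2" unfolding e_def True
      by (simp add: inner_diff_left inner_diff_right vunit wunit vw wv c_def power2_eq_square)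
    also have "\<dots> = h - h / n"
    proof -
      have H: "lam * lam + h * (n * n) = h * n + n * n" using npos unfolding h_def by (simp add: field_simps power2_eq_square)
      have "n*(lam * lam + h * (n * n)) = n*(h * n + n * n)" using H by (rule arg_cong[where f="\<lambda>x. n*x"])
      hence G: "h*(n*n) + n*(n*n) = lam*(lam*n) + h*(n*(n*n))" by (simp add: algebra_simps)
      show ?thesis using npos G unfolding c_def by (simp add: field_simps power2_eq_square)
    qed
    finally show ?thesis using True by simp
  next
    case False
    have "e i \<bullet> e j = (lam\<^sup>2 - n) / (n * (n - 1)) - c\<^sup>2" unfolding e_def
      by (simp add: inner_diff_left inner_diff_right vv[OF False] wunit vw wv c_def power2_eq_square)
    also have "\<dots> = - h / n" unfolding c_def h_def using npos
      by (simp add: field_simps power2_eq_square)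
    finally show ?thesis using False by simp
  qed
  obtain i0 :: 'n where True by simp
  define I where "I = UNIV - {i0}"
  define S where "S = insert w (e ` I)"
  have injI: "inj_on e I"
  proof (rule inj_onI)
    fix i j assume "i \<in> I" "j \<in> I" "e i = e j"
    show "i = j"
    proof (rule ccontr)
      assume "i \<noteq> j"
      have "e i \<bullet> e i = e i \<bullet> e j" using \<open>e i = e j\<close> by simp
      thus False using ee[of i i] ee[of i j] \<open>i \<noteq> j\<close> hpos by simp
    qed
  qed
  have wnot: "w \<notin> e ` I" using ew wunit by auto
  have finS: "finite S" unfolding S_def by simp
  have cardI: "card I = CARD('n) - 1" unfolding I_def by (simp add: card_Diff_singleton)
  have cardS: "card S = CARD('n)" unfolding S_def using wnot injI cardI
    by (simp add: card_image)
  have indep: "independent S"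
  proof
    assume "dependent S"
    then obtain f where f1: "\<exists>x\<in>S. f x \<noteq> 0" and f2: "(\<Sum>x\<in>S. f x *\<^sub>R x) = 0"
      using real_vector.dependent_finite[OF finS] by auto
    have f3: "f w *\<^sub>R w + (\<Sum>i\<in>I. f (e i) *\<^sub>R e i) = 0"
      using f2 unfolding S_def using wnot injI by (simp add: sum.reindex)
    have "(f w *\<^sub>R w + (\<Sum>i\<in>I. f (e i) *\<^sub>R e i)) \<bullet> w = 0" using f3 by simp
    hence fw: "f w = 0" by (simp add: inner_add_left inner_sum_left ew wunit)
    define F where "F = (\<Sum>i\<in>I. f (e i))"
    have fk: "f (e k) = F / n" if "k \<in> I" for k
    proof -
      have "(f w *\<^sub>R w + (\<Sum>i\<in>I. f (e i) *\<^sub>R e i)) \<bullet> e k = 0" using f3 by simp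
      hence "(\<Sum>i\<in>I. f (e i) * ((if i = k then h else 0) - h / n)) = 0"
        by (simp add: inner_add_left inner_sum_left fw ee)
      hence "f (e k) * h - (h / n) * (\<Sum>i\<in>I. f (e i)) = 0"
        using that by (simp add: sum_delta_aux)
      hence "f (e k) * h - F * (h/n) = 0" using that unfolding F_def by simp
      thus ?thesis using hpos npos by (simp add: field_simps)
    qed
    have "(\<Sum>i\<in>I. f (e i)) = (\<Sum>i\<in>I. F / n)" by (rule sum.cong) (auto simp: fk)
    hence "F = (\<Sum>i\<in>I. F / n)" unfolding F_def[symmetric] .
    also have "\<dots> = (n - 1) * F / n" using cardI n_def npos by (simp add: of_nat_diff)
    finally have "F = 0" using npos by (simp add: field_simps)
    hence "\<forall>x\<in>S. f x = 0" using fk fw unfolding S_def by auto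
    thus False using f1 by auto
  qed
  have spanS: "span S = UNIV"
    using eucl.card_ge_dim_independent[of S UNIV] indep cardS by auto
  obtain f where uf: "u = (\<Sum>x\<in>S. f x *\<^sub>R x)"
    using spanS real_vector.span_finite[OF finS] by auto
  define b where "b = f w"
  define cc where "cc i = (if i \<in> I then f (e i) else 0)" for i
  have urep: "u = b *\<^sub>R w + (\<Sum>i\<in>UNIV. cc i *\<^sub>R e i)"
  proof -
    have "(\<Sum>i\<in>UNIV. cc i *\<^sub>R e i) = (\<Sum>i\<in>I. f (e i) *\<^sub>R e i)"
      unfolding cc_def by (rule sum.mono_neutral_cong_right) auto
    thus ?thesis using uf unfolding S_def b_def using wnot injI by (simp add: sum.reindex)
  qed
  define C where "C = (\<Sum>i\<in>UNIV. cc i)"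
  have uw: "u \<bullet> w = b" unfolding urep by (simp add: inner_add_left inner_sum_left ew wunit)
  have ue: "u \<bullet> e k = h * cc k - h / n * C" for k
  proof -
    have "u \<bullet> e k = (\<Sum>i\<in>UNIV. cc i * ((if i = k then h else 0) - h / n))"
      unfolding urep by (simp add: inner_add_left inner_sum_left ee we ew)
    also have "\<dots> = cc k * h - (h / n) * (\<Sum>i\<in>UNIV. cc i)"
      by (simp add: sum_delta_aux)
    finally show ?thesis unfolding C_def by simp
  qed
  have uv: "u \<bullet> v k = h * cc k - h / n * C + c * b" for k
  proof -
    have "v k = e k + c *\<^sub>R w" unfolding e_def by simp
    thus ?thesis using ue[of k] uw by (simp add: inner_add_right)
  qed
  have cardn: "real (card (UNIV :: 'n set)) = n" using n_def by simp
  have sume: "(\<Sum>k\<in>UNIV. h * cc k - h / n * C) = 0"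
    using npos by (simp add: sum_subtractf sum_distrib_left[symmetric] C_def n_def)
  have uu: "u \<bullet> u = b\<^sup>2 + (\<Sum>k\<in>UNIV. cc k * (h * cc k - h / n * C))"
  proof -
    have "u \<bullet> u = b * (u \<bullet> w) + (\<Sum>k\<in>UNIV. cc k * (u \<bullet> e k))"
      by (subst (2) urep) (simp add: inner_add_right inner_sum_right)
    thus ?thesis using uw ue by (simp add: power2_eq_square)
  qed
  have sq: "(\<Sum>k\<in>UNIV. (h * cc k - h / n * C)\<^sup>2) = h * (\<Sum>k\<in>UNIV. cc k * (h * cc k - h / n * C))"
  proof -
    have "(\<Sum>k\<in>UNIV. (h * cc k - h / n * C)\<^sup>2) = (\<Sum>k\<in>UNIV. h * cc k * (h * cc k - h / n * C)) - (\<Sum>k\<in>UNIV. h / n * C * (h * cc k - h / n * C))"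
      by (simp add: sum_subtractf[symmetric] power2_eq_square algebra_simps)
    also have "(\<Sum>k\<in>UNIV. h / n * C * (h * cc k - h / n * C)) = 0"
      unfolding sum_distrib_left[symmetric] sume by simp
    finally show ?thesis by (simp add: sum_distrib_left algebra_simps)
  qed
  have s1: "(\<Sum>i\<in>UNIV. (u \<bullet> v i)\<^sup>2) = (\<Sum>k\<in>UNIV. (h * cc k - h / n * C)\<^sup>2)
     + 2 * c * b * (\<Sum>k\<in>UNIV. h * cc k - h / n * C) + n * (c * b)\<^sup>2"
  proof -
    define a where "a k = h * cc k - h / n * C" for k
    define z where "z = c * b"
    have "(\<Sum>i\<in>UNIV. (u \<bullet> v i)\<^sup>2) = (\<Sum>k\<in>UNIV. (a k)\<^sup>2 + 2 * z * a k + z\<^sup>2)"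
      by (rule sum.cong) (simp_all add: uv a_def z_def power2_sum)
    also have "\<dots> = (\<Sum>k\<in>UNIV. (a k)\<^sup>2) + 2 * z * (\<Sum>k\<in>UNIV. a k) + n * z\<^sup>2"
      unfolding sum.distrib sum_distrib_left[symmetric] using cardn by simp
    finally show ?thesis unfolding a_def z_def by simp
  qed
  have f1: "(\<Sum>i\<in>UNIV. (u \<bullet> v i)\<^sup>2) = h * ((u \<bullet> u) - (u \<bullet> w)\<^sup>2) + lam\<^sup>2 / n * (u \<bullet> w)\<^sup>2"
    unfolding s1 sume sq uw uu using npos
    by (simp add: c_def power2_eq_square field_simps)
  have f2: "(\<Sum>i\<in>UNIV. u \<bullet> v i) = lam * (u \<bullet> w)"
    using sume npos by (simp add: uv sum.distrib cardn c_def uw)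
  show ?thesis using f1 f2 unfolding h_def by simp
qed
theorem mainTheorem16:
  fixes v :: "'n::finite \<Rightarrow> real ^ 'n" and w :: "real ^ 'n"
    and lam \<alpha> \<beta> :: real
  defines "d \<equiv> CARD('n)"
  assumes d3: "d \<ge> 3"
    and hlam: "\<bar>lam\<bar> \<le> 2 * sqrt (real d - 1)"
    and vunit: "\<And>i. norm (v i) = 1"
    and wunit: "norm w = 1"
    and vv: "\<And>i j. i \<noteq> j \<Longrightarrow> v i \<bullet> v j = (lam\<^sup>2 - real d) / (real d * (real d - 1))"
    and vw: "\<And>i. v i \<bullet> w = lam / real d"
    and orth: "\<And>i. (\<alpha> *\<^sub>R w + \<beta> *\<^sub>R v i) \<bullet> (\<alpha> *\<^sub>R v i + \<beta> *\<^sub>R w) = 0"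
    and anorm: "\<And>i. norm (\<alpha> *\<^sub>R w + \<beta> *\<^sub>R v i) = 1"
    and bnorm: "\<And>i. norm (\<alpha> *\<^sub>R v i + \<beta> *\<^sub>R w) = 1"
  shows "\<exists>t1 t2. t1 \<ge> 0 \<and> t2 \<ge> 0 \<and> t1 + t2 = 1 \<and>
    (\<forall>u :: real ^ 'n. (norm u)\<^sup>2 =
       (\<Sum>i\<in>UNIV. t1 * (u \<bullet> (\<alpha> *\<^sub>R w + \<beta> *\<^sub>R v i))\<^sup>2
                   + t2 * (u \<bullet> (\<alpha> *\<^sub>R v i + \<beta> *\<^sub>R w))\<^sup>2))"
  proof -
  define n where "n = real d"
  have n3: "n \<ge> 3" using d3 unfolding n_def by simp
  have l4: "lam\<^sup>2 \<le> 4 * (n - 1)"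
  proof -
    have "\<bar>lam\<bar>\<^sup>2 \<le> (2 * sqrt (n - 1))\<^sup>2" using hlam unfolding n_def
      by (intro power_mono) auto
    thus ?thesis using n3 by (simp add: power_mult_distrib)
  qed
  have llt: "lam\<^sup>2 < n\<^sup>2"
  proof -
    have "0 < (n - 2)\<^sup>2" using n3 by simp
    thus ?thesis using l4 by (simp add: power2_eq_square algebra_simps)
  qed
  have vunit': "\<And>i. v i \<bullet> v i = 1" using vunit by (simp add: power2_norm_eq_inner[symmetric])
  have wunit': "w \<bullet> w = 1" using wunit by (simp add: power2_norm_eq_inner[symmetric])
  have wv: "w \<bullet> v i = lam / n" for i using vw[of i] by (simp add: inner_commute n_def)
  have ncard: "n = real CARD('n)" by (simp add: n_def d_def)
  have vv': "\<And>i j. i \<noteq> j \<Longrightarrow> v i \<bullet> v j = (lam\<^sup>2 - n) / (n * (n - 1))" using vv by (simp add: n_def)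
  have vw': "\<And>i. v i \<bullet> w = lam / n" using vw by (simp add: n_def)
  have fr1: "(\<Sum>i\<in>UNIV. (u \<bullet> v i)\<^sup>2) = (1 - (lam\<^sup>2 - n) / (n * (n - 1))) * ((u \<bullet> u) - (u \<bullet> w)\<^sup>2) + lam\<^sup>2 / n * (u \<bullet> w)\<^sup>2"
    and fr2: "(\<Sum>i\<in>UNIV. u \<bullet> v i) = lam * (u \<bullet> w)" for u
    using frame[where n=n and v=v and w=w and lam=lam and u=u, OF ncard n3 llt vunit' wunit' vv' vw'] by auto
  obtain i0 :: 'n where True by simp
  have E1: "\<alpha>\<^sup>2 + \<beta>\<^sup>2 + 2 * (\<alpha> * \<beta>) * (lam / n) = 1"
  proof -
    have "(norm (\<alpha> *\<^sub>R w + \<beta> *\<^sub>R v i0))\<^sup>2 = 1" using anorm by simp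
    thus ?thesis unfolding power2_norm_eq_inner
      by (simp add: inner_add_left inner_add_right vunit' wunit' wv vw' power2_eq_square algebra_simps)
  qed
  have E2: "(\<alpha>\<^sup>2 + \<beta>\<^sup>2) * (lam / n) + 2 * (\<alpha> * \<beta>) = 0"
    using orth[of i0]
    by (simp add: inner_add_left inner_add_right vunit' wunit' wv vw' power2_eq_square algebra_simps)
  define D where "D = n\<^sup>2 - lam\<^sup>2"
  have Dpos: "D > 0" using llt unfolding D_def by simp
  define A where "A = \<alpha>\<^sup>2"
  define B where "B = \<beta>\<^sup>2"
  define p where "p = \<alpha> * \<beta>"
  have npos: "n > 0" using n3 by simp
  have sval: "A + B = n\<^sup>2 / D" and pval: "p = - n * lam / (2 * D)"
  proof -
    have e1: "A + B + (2*p)*(lam/n) = 1" using E1 unfolding A_def B_def p_def by simp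
    have p2: "2*p = -((A+B)*(lam/n))" using E2 unfolding A_def B_def p_def by linarith
    have "A + B + (-((A+B)*(lam/n)))*(lam/n) = 1" using e1 unfolding p2 .
    hence "(A + B) * (n\<^sup>2 - lam\<^sup>2) = n\<^sup>2" using npos by (simp add: field_simps power2_eq_square)
    thus sv: "A + B = n\<^sup>2 / D" using Dpos unfolding D_def by (simp add: field_simps)
    show "p = - n * lam / (2 * D)" using p2 unfolding sv using npos Dpos by (simp add: field_simps power2_eq_square)
  qed
  have n1: "n > 1" using n3 by simp
  have Dne: "D \<noteq> 0" using Dpos by simp
  have lamsq: "lam\<^sup>2 = n\<^sup>2 - D" unfolding D_def by simp
  have hD: "1 - (lam\<^sup>2 - n) / (n * (n - 1)) = D / (n * (n - 1))"
    unfolding lamsq using n1 by (simp add: field_simps power2_eq_square)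
  define K where "K = n * (n - 1) / D"
  have AB: "A * B = p\<^sup>2" by (simp add: A_def B_def p_def power_mult_distrib)
  have p2v: "p\<^sup>2 = n\<^sup>2 * (n\<^sup>2 - D) / (4 * D\<^sup>2)"
    unfolding pval by (simp add: power_divide power_mult_distrib lamsq[symmetric] power2_eq_square) (simp add: D_def power2_eq_square)
  have quad: "(K - A) * (K - B) \<le> 0"
  proof -
    have "(K - A) * (K - B) = K\<^sup>2 - (A + B) * K + A * B" by (simp add: power2_eq_square algebra_simps)
    also have "\<dots> = n\<^sup>2 * ((n\<^sup>2 - D) / 4 - (n - 1)) / D\<^sup>2"
      unfolding sval AB p2v K_def using Dne n1 by (simp add: field_simps power2_eq_square)
    also have "\<dots> \<le> 0"
    proof -
      have "(n\<^sup>2 - D) / 4 - (n - 1) \<le> 0" using l4 lamsq by simp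
      hence "n\<^sup>2 * ((n\<^sup>2 - D) / 4 - (n - 1)) \<le> 0" by (simp add: mult_nonneg_nonpos)
      thus ?thesis using Dpos by (simp add: divide_nonpos_pos)
    qed
    finally show ?thesis .
  qed
  have AneB: "B - A \<noteq> 0"
  proof -
    have "(A - B)\<^sup>2 = (A + B)\<^sup>2 - 4 * (A * B)" by (simp add: power2_eq_square algebra_simps)
    also have "\<dots> = n\<^sup>2 / D" unfolding sval AB p2v using Dne n1 by (simp add: field_simps power2_eq_square)
    finally have "(A - B)\<^sup>2 > 0" using Dpos npos by simp
    thus ?thesis by auto
  qed
  define t1 where "t1 = (K - A) / (B - A)"
  define t2 where "t2 = (B - K) / (B - A)"
  have t12: "t1 + t2 = 1"
  proof -
    have "t1 + t2 = ((K - A) + (B - K)) / (B - A)" unfolding t1_def t2_def by (simp only: add_divide_distrib)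
    thus ?thesis using AneB by simp
  qed
  have t1nn: "t1 \<ge> 0"
  proof -
    have "(K - A) * (B - A) = (K - A)\<^sup>2 - (K - A) * (K - B)" by (simp add: power2_eq_square algebra_simps)
    hence "(K - A) * (B - A) \<ge> 0" using quad by (smt (verit) zero_le_power2)
    hence "(K - A) * (B - A) / (B - A)\<^sup>2 \<ge> 0" by simp
    moreover have "(K - A) / (B - A) = (K - A) * (B - A) / (B - A)\<^sup>2"
      using AneB by (simp add: power2_eq_square)
    ultimately show ?thesis unfolding t1_def by simp
  qed
  have t2nn: "t2 \<ge> 0"
  proof -
    have "(B - K) * (B - A) = (B - K)\<^sup>2 - (K - A) * (K - B)" by (simp add: power2_eq_square algebra_simps)
    hence "(B - K) * (B - A) \<ge> 0" using quad by (smt (verit) zero_le_power2)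
    hence "(B - K) * (B - A) / (B - A)\<^sup>2 \<ge> 0" by simp
    moreover have "(B - K) / (B - A) = (B - K) * (B - A) / (B - A)\<^sup>2"
      using AneB by (simp add: power2_eq_square)
    ultimately show ?thesis unfolding t2_def by simp
  qed
  have Kt: "t1 * B + t2 * A = K"
  proof -
    have "t1 * B + t2 * A = ((K - A) * B + (B - K) * A) / (B - A)" unfolding t1_def t2_def by (simp only: add_divide_distrib times_divide_eq_left)
    also have "(K - A) * B + (B - K) * A = K * (B - A)" by (simp add: algebra_simps)
    finally show ?thesis using AneB by simp
  qed
  have Lt: "t1 * A + t2 * B = n\<^sup>2 / D - K"
  proof -
    have "t1 * A + t2 * B = (t1 + t2) * (A + B) - (t1 * B + t2 * A)" by (simp add: algebra_simps)
    thus ?thesis using t12 Kt sval by simp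
  qed
  have main: "(norm u)\<^sup>2 = (\<Sum>i\<in>UNIV. t1 * (u \<bullet> (\<alpha> *\<^sub>R w + \<beta> *\<^sub>R v i))\<^sup>2
                   + t2 * (u \<bullet> (\<alpha> *\<^sub>R v i + \<beta> *\<^sub>R w))\<^sup>2)" for u :: "real ^ 'n"
  proof -
    define y where "y = u \<bullet> w"
    define L where "L = n\<^sup>2 / D - K"
    have summ: "t1 * (u \<bullet> (\<alpha> *\<^sub>R w + \<beta> *\<^sub>R v i))\<^sup>2 + t2 * (u \<bullet> (\<alpha> *\<^sub>R v i + \<beta> *\<^sub>R w))\<^sup>2
        = K * (u \<bullet> v i)\<^sup>2 + L * y\<^sup>2 + 2 * p * y * (u \<bullet> v i)" for i
    proof -
      have "t1 * (u \<bullet> (\<alpha> *\<^sub>R w + \<beta> *\<^sub>R v i))\<^sup>2 + t2 * (u \<bullet> (\<alpha> *\<^sub>R v i + \<beta> *\<^sub>R w))\<^sup>2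
          = (t1 * B + t2 * A) * (u \<bullet> v i)\<^sup>2 + (t1 * A + t2 * B) * y\<^sup>2 + (t1 + t2) * (2 * p * y * (u \<bullet> v i))"
        unfolding A_def B_def p_def y_def by (simp add: inner_add_right power2_eq_square algebra_simps)
      thus ?thesis unfolding Kt Lt t12 L_def by simp
    qed
    have "(\<Sum>i\<in>UNIV. t1 * (u \<bullet> (\<alpha> *\<^sub>R w + \<beta> *\<^sub>R v i))\<^sup>2 + t2 * (u \<bullet> (\<alpha> *\<^sub>R v i + \<beta> *\<^sub>R w))\<^sup>2)
        = (\<Sum>i\<in>UNIV. K * (u \<bullet> v i)\<^sup>2 + L * y\<^sup>2 + 2 * p * y * (u \<bullet> v i))"
      using summ by simp
    also have "\<dots> = K * (\<Sum>i\<in>UNIV. (u \<bullet> v i)\<^sup>2) + n * (L * y\<^sup>2) + 2 * p * y * (\<Sum>i\<in>UNIV. u \<bullet> v i)"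
      unfolding sum.distrib sum_distrib_left[symmetric] using ncard by simp
    also have "\<dots> = K * (D / (n * (n - 1)) * ((u \<bullet> u) - y\<^sup>2) + (n\<^sup>2 - D) / n * y\<^sup>2) + n * (L * y\<^sup>2) + 2 * p * y * (lam * y)"
      unfolding fr1 fr2 hD unfolding lamsq y_def ..
    also have "2 * p * y * (lam * y) = - n * (n\<^sup>2 - D) / D * y\<^sup>2"
      unfolding pval lamsq[symmetric] using Dne by (simp add: field_simps power2_eq_square)
    also have "K * (D / (n * (n - 1)) * ((u \<bullet> u) - y\<^sup>2) + (n\<^sup>2 - D) / n * y\<^sup>2) + n * (L * y\<^sup>2) + - n * (n\<^sup>2 - D) / D * y\<^sup>2 = u \<bullet> u"
      unfolding K_def L_def using Dne n1 by (simp add: field_simps power2_eq_square)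
    finally show ?thesis by (simp add: power2_norm_eq_inner)
  qed
  show ?thesis using t1nn t2nn t12 main by blast
qed

end
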